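(* Fix $k\in[n]$ and arbitrary negotiating positions $\mu_i'\in\mathbb{R}^n$ for all $i\neq k$. For $\mu_k'\in\mathbb{R}^n$, let $M'$ be the matrix with columns $\mu_1',\dots,\mu_n'$ and $(W',P')$ the stable point for $M'$. Then the map $\mu_k'\mapsto g_k(W',P')$ is a quadratic function of $\mu_k'$ whose Hessian is negative definite.
   Context: Fix agents $[n]=\{1,\dots,n\}$. Let $\Sigma\in\mathbb{R}^{n\times n}$ be symmetric positive definite, $\Gamma=\mathrm{diag}(\gamma_1,\dots,\gamma_n)$ with all $\gamma_i>0$, and let $M\in\mathbb{R}^{n\times n}$ be the matrix of true beliefs with $i$-th column $\mu_i=Me_i$. For a matrix of reported negotiating positions $M'\in\mathbb{R}^{n\times n}$, the stable point for $M'$ is the unique pair $(W,P)$ of real $n\times n$ matrices with $W=W^T$, $P^T=-P$ and $M'-P=2\Sigma W\Gamma$; equivalently $\mathrm{vec}(W)=\tfrac12(\Gamma\otimes\Sigma+\Sigma\otimes\Gamma)^{-1}\mathrm{vec}(M'+M'^T)$ and $P=M'-2\Sigma W\Gamma$. Here $\mathrm{vec}$ stacks columns and $e_i$ is the $i$-th standard basis vector. Agent $i$'s (true) utility at $(W,P)$ is $g_i(W,P)=w_i^T(\mu_i-Pe_i)-\gamma_i\, w_i^T\Sigma w_i$, where $w_i=We_i$. *)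

theory Defs
  imports "HOL-Analysis.Analysis"
begin

text \<open>Matrices are n x n real matrices indexed by a finite type 'n
  (row index first: A $ i $ j). Column j of A is column j A.\<close>

definition sym_pos_def_mat :: "real^'n^'n \<Rightarrow> bool" where
  "sym_pos_def_mat S \<longleftrightarrow> transpose S = S \<and> (\<forall>x. x \<noteq> 0 \<longrightarrow> x \<bullet> (S *v x) > 0)"

definition diag_mat :: "real^'n \<Rightarrow> real^'n^'n" where
  "diag_mat g = (\<chi> i j. if i = j then g $ i else 0)"

definition stable_point ::
  "real^'n^'n \<Rightarrow> real^'n^'n \<Rightarrow> real^'n^'n \<Rightarrow> (real^'n^'n) \<times> (real^'n^'n)" where
  "stable_point Sg Gm M' =
     (THE (W, P). transpose W = W \<and> transpose P = - P \<and>
                 M' - P = 2 *\<^sub>R (Sg ** W ** Gm))"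

text \<open>Agent i's true utility g_i(W,P) = w_i^T (mu_i - P e_i) - gamma_i w_i^T Sg w_i.\<close>
definition utility ::
  "real^'n^'n \<Rightarrow> real^'n \<Rightarrow> real^'n^'n \<Rightarrow> 'n \<Rightarrow> (real^'n^'n) \<times> (real^'n^'n) \<Rightarrow> real" where
  "utility Sg g M i WP =
     (let w = column i (fst WP) in
        w \<bullet> (column i M - column i (snd WP)) - g $ i * (w \<bullet> (Sg *v w)))"

definition set_column :: "real^'n^'n \<Rightarrow> 'n \<Rightarrow> real^'n \<Rightarrow> real^'n^'n" where
  "set_column M0 k x = (\<chi> i j. if j = k then x $ i else M0 $ i $ j)"

text \<open>f is a quadratic function f(x) = 1/2 x^T H x + b^T x + c with H symmetric;
  then H is exactly the Hessian of f.\<close>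
definition quadratic_with_hessian :: "(real^'n \<Rightarrow> real) \<Rightarrow> real^'n^'n \<Rightarrow> bool" where
  "quadratic_with_hessian f H \<longleftrightarrow> transpose H = H \<and>
     (\<exists>b c. \<forall>x. f x = (1/2) * (x \<bullet> (H *v x)) + b \<bullet> x + c)"

definition neg_def_mat :: "real^'n^'n \<Rightarrow> bool" where
  "neg_def_mat H \<longleftrightarrow> (\<forall>x. x \<noteq> 0 \<longrightarrow> x \<bullet> (H *v x) < 0)"

end

theory Submission imports Defs begin
lemma tr_add: "transpose (A + B) = transpose A + transpose (B::real^'n^'m)"
  by (simp add: transpose_def vec_eq_iff)
lemma tr_diff: "transpose (A - B) = transpose A - transpose (B::real^'n^'m)"
  by (simp add: transpose_def vec_eq_iff)
lemma tr_uminus: "transpose (- A) = - transpose (A::real^'n^'m)"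
  by (simp add: transpose_def vec_eq_iff)
lemma tr_diag: "transpose (diag_mat g) = diag_mat g"
  by (simp add: transpose_def diag_mat_def vec_eq_iff)
lemma mm_rdistrib: "(A + B) ** C = A ** C + B ** (C::real^'n^'m)"
  by (simp add: matrix_matrix_mult_def vec_eq_iff sum.distrib distrib_right)
lemma mm_scale_l: "(r *\<^sub>R A) ** C = r *\<^sub>R (A ** (C::real^'n^'m))"
  by (simp add: matrix_matrix_mult_def vec_eq_iff sum_distrib_left mult.assoc)
lemma mm_scale_r: "A ** (r *\<^sub>R C) = r *\<^sub>R (A ** (C::real^'n^'m))"
  by (simp add: matrix_matrix_mult_def vec_eq_iff sum_distrib_left mult.left_commute)
lemma diag_right: "(A ** diag_mat g) $ i $ j = A $ i $ j * g $ j"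
  by (simp add: matrix_matrix_mult_def diag_mat_def if_distrib if_distribR cong: if_cong)
lemma diag_left: "(diag_mat g ** A) $ i $ j = g $ i * A $ i $ j"
proof -
  have "(\<Sum>k\<in>UNIV. (if i = k then g$i else 0) * A$k$j) = (\<Sum>k\<in>UNIV. if k = i then g$k * A$k$j else 0)"
    by (rule sum.cong) auto
  then show ?thesis by (simp add: matrix_matrix_mult_def diag_mat_def)
qed
lemma inner_tr: "x \<bullet> (transpose B *v y) = (B *v x) \<bullet> (y::real^'n)"
proof -
  have "x \<bullet> (transpose B *v y) = (\<Sum>i\<in>UNIV. \<Sum>j\<in>UNIV. x$i * (B$j$i * y$j))"
    by (simp add: inner_vec_def matrix_vector_mult_def transpose_def sum_distrib_left)
  also have "\<dots> = (\<Sum>j\<in>UNIV. \<Sum>i\<in>UNIV. B$j$i * x$i * y$j)"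
    by (subst sum.swap) (simp add: mult_ac)
  also have "\<dots> = (B *v x) \<bullet> y"
    by (simp add: inner_vec_def matrix_vector_mult_def sum_distrib_right)
  finally show ?thesis .
qed

lemma frob1: "D \<bullet> (Sg ** D ** diag_mat g) = (\<Sum>j\<in>UNIV. g$j * (column j D \<bullet> (Sg *v column j (D::real^'n^'n))))"
proof -
  have "D \<bullet> (Sg ** D ** diag_mat g) = (\<Sum>i\<in>UNIV. \<Sum>j\<in>UNIV. D$i$j * ((Sg ** D)$i$j * g$j))"
    by (simp add: inner_vec_def diag_right)
  also have "\<dots> = (\<Sum>j\<in>UNIV. \<Sum>i\<in>UNIV. g$j * (D$i$j * (\<Sum>a\<in>UNIV. Sg$i$a * D$a$j)))"
    by (subst sum.swap) (simp add: algebra_simps matrix_matrix_mult_def)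
  also have "\<dots> = (\<Sum>j\<in>UNIV. g$j * (column j D \<bullet> (Sg *v column j (D::real^'n^'n))))"
    by (simp add: inner_vec_def column_def matrix_vector_mult_def sum_distrib_left)
  finally show ?thesis .
qed

lemma frob2: assumes "transpose Sg = Sg"
  shows "D \<bullet> (diag_mat g ** D ** Sg) = (\<Sum>i\<in>UNIV. g$i * (row i D \<bullet> (Sg *v row i (D::real^'n^'n))))"
proof -
  have s: "Sg$a$b = Sg$b$a" for a b using assms by (metis transpose_def vec_lambda_beta)
  have "D \<bullet> (diag_mat g ** D ** Sg) = (\<Sum>i\<in>UNIV. \<Sum>j\<in>UNIV. D$i$j * (\<Sum>b\<in>UNIV. (g$i * D$i$b) * Sg$b$j))"
    by (simp add: inner_vec_def matrix_matrix_mult_def[of "diag_mat g ** D"] diag_left)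
  also have "\<dots> = (\<Sum>i\<in>UNIV. g$i * (\<Sum>j\<in>UNIV. D$i$j * (\<Sum>b\<in>UNIV. Sg$j$b * D$i$b)))"
    by (simp add: sum_distrib_left algebra_simps s)
  also have "\<dots> = (\<Sum>i\<in>UNIV. g$i * (row i D \<bullet> (Sg *v row i (D::real^'n^'n))))"
    by (simp add: inner_vec_def row_def matrix_vector_mult_def)
  finally show ?thesis .
qed
lemma quad_lemma:
  fixes f :: "real^'n \<Rightarrow> real"
  assumes "\<And>x. f x = x \<bullet> (A *v x) + b \<bullet> x + c"
  shows "quadratic_with_hessian f (A + transpose A)"
    and "\<And>x. x \<bullet> ((A + transpose A) *v x) = 2 * (x \<bullet> (A *v x))"
proof -
  have h: "x \<bullet> ((A + transpose A) *v x) = 2 * (x \<bullet> (A *v x))" for x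
  proof -
    have "x \<bullet> ((A + transpose A) *v x) = x \<bullet> (A *v x) + x \<bullet> (transpose A *v x)"
      by (simp only: matrix_vector_mult_add_rdistrib inner_add_right)
    also have "\<dots> = x \<bullet> (A *v x) + (A *v x) \<bullet> x" by (simp only: inner_tr)
    finally show ?thesis by (simp add: inner_commute)
  qed
  show "\<And>x. x \<bullet> ((A + transpose A) *v x) = 2 * (x \<bullet> (A *v x))" by (rule h)
  show "quadratic_with_hessian f (A + transpose A)"
    unfolding quadratic_with_hessian_def
  proof
    show "transpose (A + transpose A) = A + transpose A" by (metis tr_add transpose_transpose add.commute)
    show "\<exists>b c. \<forall>x. f x = 1 / 2 * (x \<bullet> ((A + transpose A) *v x)) + b \<bullet> x + c"
      by (rule exI[of _ b], rule exI[of _ c]) (auto simp only: h assms)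
  qed
qed
lemma vec_rearr: fixes a b x y :: "'a::ab_group_add" shows "- (a - x) = b - y \<Longrightarrow> a + b = x + y"
  by (metis add.commute diff_add_cancel diff_diff_eq2 minus_diff_eq)
lemma vec_rearr2: fixes a b x y :: "'a::ab_group_add" shows "a + b = x + y \<Longrightarrow> b - y = - (a - x)"
  by (metis add.commute diff_add_cancel diff_diff_eq2 minus_diff_eq)
theorem mainTheorem4:
  fixes Sg M M0 :: "real^'n^'n" and g :: "real^'n" and k :: 'n
  assumes "sym_pos_def_mat Sg"
    and "\<forall>i. g $ i > 0"
  shows "\<exists>H. quadratic_with_hessian
               (\<lambda>x. utility Sg g M k
                      (stable_point Sg (diag_mat g) (set_column M0 k x))) H
             \<and> neg_def_mat H"
proof -
  define Gm where "Gm = diag_mat g"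
  define qf where "qf v = v \<bullet> (Sg *v v)" for v
  have symS: "transpose Sg = Sg" using assms(1) by (simp add: sym_pos_def_mat_def)
  have qpos: "v \<noteq> 0 \<Longrightarrow> qf v > 0" for v using assms(1) by (simp add: sym_pos_def_mat_def qf_def)
  have qnn: "qf v \<ge> 0" for v using qpos[of v] by (cases "v = 0") (auto simp: qf_def)
  have gpos: "g$i > 0" for i using assms(2) by auto
  define Lop where "Lop W = Sg ** W ** Gm + Gm ** W ** Sg" for W :: "real^'n^'n"
  have linL: "linear Lop"
    by (rule linearI) (simp_all add: Lop_def matrix_add_ldistrib mm_rdistrib mm_scale_l mm_scale_r scaleR_add_right)
  define S where "S D = (\<Sum>j\<in>UNIV. g$j * qf (column j D))" for D :: "real^'n^'n"
  have frob: "D \<bullet> Lop D = S D + (\<Sum>i\<in>UNIV. g$i * qf (row i D))" for D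
    unfolding Lop_def S_def qf_def Gm_def inner_add_right frob1 frob2[OF symS] ..
  have Snn: "S D \<ge> 0" for D unfolding S_def by (intro sum_nonneg mult_nonneg_nonneg) (auto simp: qnn less_imp_le[OF gpos])
  have Rnn: "(\<Sum>i\<in>UNIV. g$i * qf (row i D)) \<ge> 0" for D
    by (intro sum_nonneg mult_nonneg_nonneg) (auto simp: qnn less_imp_le[OF gpos])
  have S0: "D = 0" if "S D = 0" for D
  proof -
    have "\<forall>j\<in>UNIV. g$j * qf (column j D) = 0"
      using that unfolding S_def
      by (subst sum_nonneg_eq_0_iff[symmetric]) (auto intro!: mult_nonneg_nonneg simp: qnn less_imp_le[OF gpos])
    then have "column j D = 0" for j
    proof (rule contrapos_pp)
      assume "column j D \<noteq> 0"
      then have "g$j * qf (column j D) > 0" using gpos[of j] qpos[of "column j D"] by simp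
      then show "\<not> (\<forall>j\<in>UNIV. g$j * qf (column j D) = 0)" by (metis UNIV_I less_irrefl)
    qed
    then show ?thesis by (simp add: vec_eq_iff column_def)
  qed
  have injL: "inj Lop"
  proof (rule injI)
    fix a b assume "Lop a = Lop b"
    then have "Lop (a - b) = 0" by (simp add: linear_diff[OF linL])
    then have "(a - b) \<bullet> Lop (a - b) = 0" by simp
    then have "S (a - b) = 0" using frob[of "a - b"] Snn[of "a-b"] Rnn[of "a-b"] by linarith
    then show "a = b" using S0[of "a - b"] by simp
  qed
  obtain Linv where linI: "linear Linv" and LI1: "\<And>x. Linv (Lop x) = x" and LI2: "\<And>x. Lop (Linv x) = x"
    using eucl.linear_injective_isomorphism[OF linL injL] by auto

  have Ltr: "Lop (transpose W) = transpose (Lop W)" for W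
    by (simp add: Lop_def tr_add matrix_transpose_mul symS Gm_def tr_diag matrix_mul_assoc add.commute)
  define Wf where "Wf Mp = Linv ((1/2) *\<^sub>R (Mp + transpose Mp))" for Mp :: "real^'n^'n"
  have LWf: "Lop (Wf Mp) = (1/2) *\<^sub>R (Mp + transpose Mp)" for Mp unfolding Wf_def LI2 ..
  have Wsym: "transpose (Wf Mp) = Wf Mp" for Mp
  proof -
    have "Lop (transpose (Wf Mp)) = Lop (Wf Mp)"
      unfolding Ltr LWf by (simp add: transpose_scalar tr_add add.commute)
    then show ?thesis using injL by (simp add: inj_eq)
  qed
  have trSWG: "transpose (Sg ** W ** Gm) = Gm ** transpose W ** Sg" for W
    by (simp add: matrix_transpose_mul symS Gm_def tr_diag matrix_mul_assoc)
  have stab: "stable_point Sg Gm Mp = (Wf Mp, Mp - 2 *\<^sub>R (Sg ** Wf Mp ** Gm))" for Mp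
    unfolding stable_point_def
  proof (rule the_equality)
    let ?W = "Wf Mp"
    have "transpose (Mp - 2 *\<^sub>R (Sg ** ?W ** Gm)) = - (Mp - 2 *\<^sub>R (Sg ** ?W ** Gm))"
    proof -
      have e: "Mp + transpose Mp = 2 *\<^sub>R (Sg ** ?W ** Gm) + 2 *\<^sub>R (Gm ** ?W ** Sg)"
        using LWf[of Mp] unfolding Lop_def by (simp add: scaleR_add_right[symmetric])
      have "transpose (Mp - 2 *\<^sub>R (Sg ** ?W ** Gm)) = transpose Mp - 2 *\<^sub>R (Gm ** ?W ** Sg)"
        by (simp add: tr_diff transpose_scalar trSWG Wsym)
      then show ?thesis using vec_rearr2[OF e] by simp
    qed
    then show "case (?W, Mp - 2 *\<^sub>R (Sg ** ?W ** Gm)) of (W, P) \<Rightarrow>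
        transpose W = W \<and> transpose P = - P \<and> Mp - P = 2 *\<^sub>R (Sg ** W ** Gm)"
      by (simp add: Wsym)
  next
    fix x assume a: "case x of (W, P) \<Rightarrow>
        transpose W = W \<and> transpose P = - P \<and> Mp - P = 2 *\<^sub>R (Sg ** W ** Gm)"
    obtain W P where x: "x = (W, P)" by (cases x)
    have W: "transpose W = W" and P: "transpose P = - P" and E: "Mp - P = 2 *\<^sub>R (Sg ** W ** Gm)"
      using a x by auto
    have P2: "P = Mp - 2 *\<^sub>R (Sg ** W ** Gm)" using E by (simp add: algebra_simps)
    have "transpose P = transpose Mp - 2 *\<^sub>R (Gm ** W ** Sg)"
      unfolding P2 by (simp add: tr_diff transpose_scalar trSWG W)
    then have "- (Mp - 2 *\<^sub>R (Sg ** W ** Gm)) = transpose Mp - 2 *\<^sub>R (Gm ** W ** Sg)"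
      using P P2 by simp
    then have "Mp + transpose Mp = 2 *\<^sub>R (Sg ** W ** Gm) + 2 *\<^sub>R (Gm ** W ** Sg)"
      by (rule vec_rearr)
    then have "Lop W = (1/2) *\<^sub>R (Mp + transpose Mp)"
      unfolding Lop_def by (simp add: scaleR_add_right[symmetric])
    then have "W = Wf Mp" unfolding Wf_def by (metis LI1)
    then show "x = (Wf Mp, Mp - 2 *\<^sub>R (Sg ** Wf Mp ** Gm))" using x P2 by simp
  qed

  have colSWG: "column k (Sg ** W ** Gm) = g$k *\<^sub>R (Sg *v column k W)" for W
    by (simp add: vec_eq_iff column_def Gm_def diag_right)
       (simp add: matrix_matrix_mult_def matrix_vector_mult_def sum_distrib_right mult_ac)
  have colset: "column k (set_column Mp k x) = x" for Mp x
    by (simp add: column_def set_column_def vec_eq_iff)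
  have coldiff: "column j (A - B) = column j A - column j B" for j A B
    by (simp add: column_def vec_eq_iff)
  have coladd: "column j (A + B) = column j A + column j B" for j A B
    by (simp add: column_def vec_eq_iff)
  have colscale: "column j (r *\<^sub>R A) = r *\<^sub>R column j A" for j r A
    by (simp add: column_def vec_eq_iff)
  have util: "utility Sg g M k (stable_point Sg Gm (set_column M0 k x)) =
     column k (Wf (set_column M0 k x)) \<bullet> column k M - column k (Wf (set_column M0 k x)) \<bullet> x
      + g$k * qf (column k (Wf (set_column M0 k x)))" for x
    unfolding stab utility_def Let_def fst_conv snd_conv coldiff colset colSWG colscale qf_def
    by (simp add: inner_diff_right algebra_simps)
  have Wadd: "Wf (A + B) = Wf A + Wf B" for A B
  proof -
    have "(1/2) *\<^sub>R (A + B + transpose (A + B)) = (1/2) *\<^sub>R (A + transpose A) + (1/2) *\<^sub>R (B + transpose B)"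
      by (simp add: tr_add algebra_simps)
    then show ?thesis unfolding Wf_def by (simp add: linear_add[OF linI])
  qed
  have Wscale: "Wf (r *\<^sub>R A) = r *\<^sub>R Wf A" for r A
  proof -
    have "(1/2) *\<^sub>R (r *\<^sub>R A + transpose (r *\<^sub>R A)) = r *\<^sub>R ((1/2) *\<^sub>R (A + transpose A))"
      by (simp add: transpose_scalar algebra_simps)
    then show ?thesis unfolding Wf_def by (simp add: linear_scale[OF linI])
  qed
  have setc: "set_column M0 k x = set_column M0 k 0 + set_column 0 k x" for x
    by (simp add: set_column_def vec_eq_iff)
  have setadd: "set_column 0 k (x + y) = set_column 0 k x + set_column 0 k y" for x y
    by (simp add: set_column_def vec_eq_iff)
  have setscale: "set_column 0 k (r *\<^sub>R x) = r *\<^sub>R set_column 0 k x" for r x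
    by (simp add: set_column_def vec_eq_iff)
  define T where "T x = column k (Wf (set_column 0 k x))" for x
  define c where "c = column k (Wf (set_column M0 k 0))"
  have wdec: "column k (Wf (set_column M0 k x)) = c + T x" for x
    unfolding T_def c_def by (subst setc) (simp only: Wadd coladd)
  have linT: "linear T"
    by (rule linearI) (simp_all only: T_def setadd setscale Wadd Wscale coladd colscale)
  have key: "g$k * qf (T x) < T x \<bullet> x" if xnz: "x \<noteq> 0" for x
  proof -
    define E where "E = set_column 0 k x"
    define D where "D = Wf E"
    have Dsym: "D$i$j = D$j$i" for i j
      using Wsym[of E] unfolding D_def[symmetric] by (metis transpose_def vec_lambda_beta)
    have rowcol: "row i D = column i D" for i
      by (simp add: row_def column_def vec_eq_iff Dsym)
    have LD: "Lop D = (1/2) *\<^sub>R (E + transpose E)" unfolding D_def by (rule LWf)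
    have e1: "D \<bullet> Lop D = 2 * S D"
      using frob[of D] unfolding rowcol S_def by simp
    have dE: "D \<bullet> E = column k D \<bullet> x"
      by (simp add: inner_vec_def E_def set_column_def column_def if_distrib if_distribR cong: if_cong)
    have dET: "D \<bullet> transpose E = column k D \<bullet> x"
    proof -
      have z: "\<And>a b. (0::real^'n^'n) $ a $ b = 0" by simp
      have "D \<bullet> transpose E = (\<Sum>i\<in>UNIV. \<Sum>j\<in>UNIV. D$i$j * (if i = k then x$j else 0))"
        by (simp add: inner_vec_def E_def set_column_def transpose_def cong: if_cong)
      also have "\<dots> = (\<Sum>i\<in>UNIV. if i = k then (\<Sum>j\<in>UNIV. D$i$j * x$j) else 0)"
        by (intro sum.cong) auto
      also have "\<dots> = (\<Sum>j\<in>UNIV. D$k$j * x$j)"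
        by simp
      also have "\<dots> = column k D \<bullet> x"
        by (simp add: inner_vec_def column_def Dsym[of k])
      finally show ?thesis .
    qed
    have Tc: "T x = column k D" unfolding T_def D_def E_def ..
    have e2: "D \<bullet> Lop D = T x \<bullet> x"
      using dE dET Tc by (simp add: LD inner_add_right)
    have Sge: "g$k * qf (column k D) \<le> S D"
      unfolding S_def by (rule member_le_sum) (auto intro!: mult_nonneg_nonneg simp: qnn less_imp_le[OF gpos])
    have Spos: "S D > 0"
    proof (rule ccontr)
      assume "\<not> S D > 0"
      then have "S D = 0" using Snn[of D] by linarith
      then have "D = 0" by (rule S0)
      then have "(1/2) *\<^sub>R (E + transpose E) = 0" using LD linear_0[OF linL] by simp
      then have "((1/2) *\<^sub>R (E + transpose E)) $ i $ k = 0" for i by simp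
      then have h: "x$i + (if i = k then x$k else 0) = 0" for i
        by (simp add: E_def set_column_def transpose_def cong: if_cong)
      have "x$i = 0" for i using h[of k] h[of i] by (cases "i = k") auto
      then have "x = 0" by (simp add: vec_eq_iff)
      with xnz show False by simp
    qed
    have "T x = column k D" unfolding T_def D_def E_def ..
    then show ?thesis using e1 e2 Sge Spos by simp
  qed
  define Tm where "Tm = matrix T"
  have TmT: "Tm *v x = T x" for x unfolding Tm_def using matrix_vector_mul(2)[OF linT] by metis
  define A where "A = g$k *\<^sub>R (transpose Tm ** Sg ** Tm) - Tm"
  define b where "b = transpose Tm *v column k M - c + (2 * g$k) *\<^sub>R (transpose Tm *v (Sg *v c))"
  define c0 where "c0 = c \<bullet> column k M + g$k * qf c"
  have xAx: "x \<bullet> (A *v x) = g$k * qf (T x) - x \<bullet> T x" for x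
  proof -
    have "A *v x = g$k *\<^sub>R (transpose Tm *v (Sg *v (Tm *v x))) - Tm *v x"
      unfolding A_def matrix_vector_mult_diff_rdistrib matrix_vector_mul_assoc scaleR_matrix_vector_assoc
      by (simp add: matrix_mul_assoc)
    then have "x \<bullet> (A *v x) = g$k * (x \<bullet> (transpose Tm *v (Sg *v (Tm *v x)))) - x \<bullet> (Tm *v x)"
      by (simp only: inner_diff_right inner_scaleR_right)
    also have "\<dots> = g$k * ((Tm *v x) \<bullet> (Sg *v (Tm *v x))) - x \<bullet> (Tm *v x)"
      by (simp only: inner_tr)
    finally show ?thesis by (simp only: TmT qf_def)
  qed
  have Sc: "u \<bullet> (Sg *v v) = (Sg *v u) \<bullet> v" for u v
    using inner_tr[of u Sg v] symS by simp
  have fx: "utility Sg g M k (stable_point Sg (diag_mat g) (set_column M0 k x)) = x \<bullet> (A *v x) + b \<bullet> x + c0" for x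
  proof -
    have q: "qf (c + T x) = qf c + 2 * ((Sg *v c) \<bullet> T x) + qf (T x)"
      unfolding qf_def matrix_vector_right_distrib inner_add_left inner_add_right Sc[of c "T x"]
      by (simp add: inner_commute[of "T x" "Sg *v c"])
    have b1: "(transpose Tm *v column k M) \<bullet> x = T x \<bullet> column k M"
      using inner_tr[of x Tm "column k M"] by (simp add: inner_commute TmT)
    have b2: "(transpose Tm *v (Sg *v c)) \<bullet> x = (Sg *v c) \<bullet> T x"
      using inner_tr[of x Tm "Sg *v c"] by (simp add: inner_commute TmT)
    have bx: "b \<bullet> x = T x \<bullet> column k M - c \<bullet> x + 2 * g$k * ((Sg *v c) \<bullet> T x)"
      unfolding b_def inner_add_left inner_diff_left inner_scaleR_left b1 b2 by simp
    show ?thesis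
      unfolding Gm_def[symmetric] util wdec xAx bx q c0_def
      by (simp add: inner_add_left inner_commute[of x "T x"] algebra_simps)
  qed
  have Q: "quadratic_with_hessian (\<lambda>x. utility Sg g M k (stable_point Sg (diag_mat g) (set_column M0 k x))) (A + transpose A)"
    and H2: "\<And>x. x \<bullet> ((A + transpose A) *v x) = 2 * (x \<bullet> (A *v x))"
    using quad_lemma[of "\<lambda>x. utility Sg g M k (stable_point Sg (diag_mat g) (set_column M0 k x))" A b c0, OF fx] by auto
  have N: "neg_def_mat (A + transpose A)"
    unfolding neg_def_mat_def
  proof (intro allI impI)
    fix x :: "real^'n" assume "x \<noteq> 0"
    then have "g$k * qf (T x) < T x \<bullet> x" by (rule key)
    then show "x \<bullet> ((A + transpose A) *v x) < 0" unfolding H2 xAx by (simp add: inner_commute)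
  qed
  show ?thesis using Q N by blast
qed
end
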